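(* Let $G$ be a weakly-reversible chemical reaction network in $s$ species and let $Z\subseteq\{1,\dots,s\}$ be nonempty. Then $Z$ is a siphon of $G$ if and only if there exists $\alpha\in\mathbb{R}^s_{\ge0}\cap V_{\mathbb{R}}(\mathcal{E}_G)$ with $Z=\{i:\alpha_i=0\}$. Moreover, $Z$ is a critical siphon if and only if there exists such an $\alpha$ for which, in addition, the invariant polyhedron containing $\alpha$ intersects $\mathbb{R}^s_{>0}$.
   Context: A chemical reaction network (CRN) consists of positive integers $s,n$, a finite directed graph $G$ with vertex set $\{1,\dots,n\}$ and edge set $E(G)$, and an injective labeling of vertex $i$ by a monic monomial $\psi_i=\prod_{j=1}^s x_j^{y_{ij}}$, $y_i=(y_{i1},\dots,y_{is})$. $G$ is weakly-reversible iff each connected component is strongly connected. The associated event-system $\mathcal{E}_G$ is the set of binomials $\psi_i-\psi_j$, one for each pair $\{i,j\}$ with $(i,j)\in E(G)$ or $(j,i)\in E(G)$; $V_{\mathbb{R}}(\mathcal{E}_G)\subseteq\mathbb{R}^s$ is its real zero set. The stoichiometric subspace is $S_G=\mathrm{span}\{y_i-y_j:(i,j)\in E(G)\}$, and for $x\in\mathbb{R}^s_{\ge0}$ the invariant polyhedron containing $x$ is $(x+S_G)\cap\mathbb{R}^s_{\ge0}$. A nonempty $Z\subseteq\{1,\dots,s\}$ is a siphon iff for every $(i,j)\in E(G)$, if $x_k\mid\psi_j$ for some $k\in Z$ then $x_l\mid\psi_i$ for some $l\in Z$. A siphon $Z$ is critical iff there is $z\in\mathbb{R}^s_{\ge0}$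 with $Z=\{i:z_i=0\}$ such that the invariant polyhedron containing $z$ meets $\mathbb{R}^s_{>0}$. *)

theory Defs
  imports "HOL-Analysis.Analysis"
begin

text \<open>A CRN: species are indexed by a finite type 's (so s = CARD('s)),
  vertices are 1..n, edges E, and vertex i is labelled by the monic monomial
  with exponent vector y i (y i k = exponent of species k).\<close>

definition crn :: "nat \<Rightarrow> (nat \<times> nat) set \<Rightarrow> (nat \<Rightarrow> 's::finite \<Rightarrow> nat) \<Rightarrow> bool" where
  "crn n E y \<longleftrightarrow> n \<ge> 1 \<and> E \<subseteq> {1..n} \<times> {1..n} \<and> inj_on y {1..n}"

definition monomial :: "(nat \<Rightarrow> 's::finite \<Rightarrow> nat) \<Rightarrow> nat \<Rightarrow> real ^ 's \<Rightarrow> real" where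
  "monomial y i x = (\<Prod>k\<in>UNIV. (x $ k) ^ (y i k))"

definition weakly_reversible :: "nat \<Rightarrow> (nat \<times> nat) set \<Rightarrow> bool" where
  "weakly_reversible n E \<longleftrightarrow>
     (\<forall>u\<in>{1..n}. \<forall>v\<in>{1..n}. (u, v) \<in> (E \<union> E\<inverse>)\<^sup>* \<longrightarrow> (u, v) \<in> E\<^sup>*)"

definition event_variety :: "(nat \<times> nat) set \<Rightarrow> (nat \<Rightarrow> 's::finite \<Rightarrow> nat) \<Rightarrow> (real ^ 's) set" where
  "event_variety E y = {x. \<forall>(i, j)\<in>E. monomial y i x - monomial y j x = 0}"

definition stoich_space :: "(nat \<times> nat) set \<Rightarrow> (nat \<Rightarrow> 's::finite \<Rightarrow> nat) \<Rightarrow> (real ^ 's) set" where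
  "stoich_space E y = span {(\<chi> k. real (y i k)) - (\<chi> k. real (y j k)) | i j. (i, j) \<in> E}"

definition nonneg_orthant :: "(real ^ 's::finite) set" where
  "nonneg_orthant = {x. \<forall>k. x $ k \<ge> 0}"

definition pos_orthant :: "(real ^ 's::finite) set" where
  "pos_orthant = {x. \<forall>k. x $ k > 0}"

definition invariant_polyhedron :: "(nat \<times> nat) set \<Rightarrow> (nat \<Rightarrow> 's::finite \<Rightarrow> nat) \<Rightarrow> real ^ 's \<Rightarrow> (real ^ 's) set" where
  "invariant_polyhedron E y x = {x + v | v. v \<in> stoich_space E y} \<inter> nonneg_orthant"

definition siphon :: "(nat \<times> nat) set \<Rightarrow> (nat \<Rightarrow> 's::finite \<Rightarrow> nat) \<Rightarrow> 's set \<Rightarrow> bool" where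
  "siphon E y Z \<longleftrightarrow> Z \<noteq> {} \<and>
     (\<forall>(i, j)\<in>E. (\<exists>k\<in>Z. y j k > 0) \<longrightarrow> (\<exists>l\<in>Z. y i l > 0))"

definition zero_set :: "real ^ 's::finite \<Rightarrow> 's set" where
  "zero_set x = {k. x $ k = 0}"

definition critical_siphon :: "(nat \<times> nat) set \<Rightarrow> (nat \<Rightarrow> 's::finite \<Rightarrow> nat) \<Rightarrow> 's set \<Rightarrow> bool" where
  "critical_siphon E y Z \<longleftrightarrow> siphon E y Z \<and>
     (\<exists>z\<in>nonneg_orthant. Z = zero_set z \<and> invariant_polyhedron E y z \<inter> pos_orthant \<noteq> {})"

end

theory Submission
  imports Defs
begin

lemma mono_zero_iff:
  "monomial y i (x::real^'s::finite) = 0 \<longleftrightarrow> (\<exists>k. x $ k = 0 \<and> y i k > 0)"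
  unfolding monomial_def by (simp add: prod_zero_iff)

lemma path_meets:
  assumes "siphon E y Z" "(x, i) \<in> E\<^sup>*" "\<exists>k\<in>Z. y i k > 0"
  shows "\<exists>k\<in>Z. y x k > 0"
  using assms(2,3)
proof (induction rule: converse_rtrancl_induct)
  case base then show ?case by simp
next
  case (step a b)
  then have "\<exists>k\<in>Z. y b k > 0" by blast
  with step(1) assms(1) show ?case unfolding siphon_def by blast
qed

lemma poly_transfer:
  fixes a b :: "real ^ 's::finite"
  assumes "a \<in> nonneg_orthant" "b \<in> nonneg_orthant" "zero_set a = zero_set b"
    and "invariant_polyhedron E y a \<inter> pos_orthant \<noteq> {}"
  shows "invariant_polyhedron E y b \<inter> pos_orthant \<noteq> {}"
proof -
  obtain v where v: "v \<in> stoich_space E y" "a + v \<in> pos_orthant"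
    using assms(4) unfolding invariant_polyhedron_def by blast
  have fin: "finite {k. b $ k \<noteq> 0}" by simp
  define m where "m = Min (insert 1 {b $ k / (\<bar>v $ k\<bar> + 1) | k. b $ k \<noteq> 0})"
  have mpos: "m > 0" unfolding m_def
  proof (subst Min_gr_iff)
    show "finite (insert 1 {b $ k / (\<bar>v $ k\<bar> + 1) | k. b $ k \<noteq> 0})" by simp
    show "insert 1 {b $ k / (\<bar>v $ k\<bar> + 1) |k. b $ k \<noteq> 0} \<noteq> {}" by simp
    show "\<forall>x\<in>insert 1 {b $ k / (\<bar>v $ k\<bar> + 1) |k. b $ k \<noteq> 0}. 0 < x"
    proof
      fix x assume "x \<in> insert 1 {b $ k / (\<bar>v $ k\<bar> + 1) |k. b $ k \<noteq> 0}"
      then consider "x = 1" | k where "x = b $ k / (\<bar>v $ k\<bar> + 1)" "b $ k \<noteq> 0" by blast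
      then show "0 < x"
      proof cases
        case 1 then show ?thesis by simp
      next
        case 2
        have "b $ k \<ge> 0" using assms(2) unfolding nonneg_orthant_def by blast
        then have "b $ k > 0" using 2(2) by linarith
        then show ?thesis using 2(1) by simp
      qed
    qed
  qed
  have mle: "m \<le> b $ k / (\<bar>v $ k\<bar> + 1)" if "b $ k \<noteq> 0" for k
    unfolding m_def by (rule Min_le) (use that in auto)
  define t where "t = m / 2"
  have tpos: "t > 0" using mpos t_def by simp
  have "b + t *\<^sub>R v \<in> pos_orthant"
    unfolding pos_orthant_def
  proof (intro CollectI allI)
    fix k
    show "0 < (b + t *\<^sub>R v) $ k"
    proof (cases "b $ k = 0")
      case True
      then have "a $ k = 0" using assms(3) unfolding zero_set_def by blast
      moreover have "(a + v) $ k > 0" using v(2) unfolding pos_orthant_def by blast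
      ultimately have "v $ k > 0" by simp
      then show ?thesis using True tpos by simp
    next
      case False
      have "b $ k \<ge> 0" using assms(2) unfolding nonneg_orthant_def by blast
      then have bk: "b $ k > 0" using False by linarith
      have "m * (\<bar>v $ k\<bar> + 1) \<le> b $ k"
      proof -
        have c: "0 < \<bar>v $ k\<bar> + 1" by simp
        show ?thesis using mle[OF False] pos_le_divide_eq[OF c] by blast
      qed
      then have "t * \<bar>v $ k\<bar> < b $ k"
      proof -
        have "t * \<bar>v $ k\<bar> \<le> m * \<bar>v $ k\<bar>" using mpos unfolding t_def
          by (intro mult_right_mono) auto
        also have "\<dots> < m * (\<bar>v $ k\<bar> + 1)" using mpos by (simp add: distrib_left)
        finally show ?thesis using \<open>m * (\<bar>v $ k\<bar> + 1) \<le> b $ k\<close> by linarith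
      qed
      moreover have "- (t * \<bar>v $ k\<bar>) \<le> t * v $ k"
      proof -
        have "t * (- \<bar>v $ k\<bar>) \<le> t * v $ k" using tpos by (intro mult_left_mono) auto
        then show ?thesis by simp
      qed
      ultimately show ?thesis by simp
    qed
  qed
  moreover have "t *\<^sub>R v \<in> stoich_space E y"
    using v(1) unfolding stoich_space_def by (rule span_mul)
  moreover have "b + t *\<^sub>R v \<in> nonneg_orthant"
    using calculation(1) unfolding pos_orthant_def nonneg_orthant_def by (simp add: less_imp_le)
  ultimately show ?thesis unfolding invariant_polyhedron_def by blast
qed

theorem lemma4p6:
  fixes n :: nat and E :: "(nat \<times> nat) set" and y :: "nat \<Rightarrow> 's::finite \<Rightarrow> nat"
    and Z :: "'s set"
  assumes "crn n E y" and "weakly_reversible n E" and "Z \<noteq> {}"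
  shows "(siphon E y Z \<longleftrightarrow>
            (\<exists>\<alpha>\<in>nonneg_orthant \<inter> event_variety E y. Z = zero_set \<alpha>))
       \<and> (critical_siphon E y Z \<longleftrightarrow>
            (\<exists>\<alpha>\<in>nonneg_orthant \<inter> event_variety E y. Z = zero_set \<alpha> \<and>
                invariant_polyhedron E y \<alpha> \<inter> pos_orthant \<noteq> {}))"
proof -
  have P1: "siphon E y Z \<longleftrightarrow> (\<exists>\<alpha>\<in>nonneg_orthant \<inter> event_variety E y. Z = zero_set \<alpha>)"
  proof
    assume S: "siphon E y Z"
    define \<alpha> :: "real^'s" where "\<alpha> = (\<chi> k. if k \<in> Z then 0 else 1)"
    have zs: "zero_set \<alpha> = Z" unfolding zero_set_def \<alpha>_def by auto
    have nn: "\<alpha> \<in> nonneg_orthant" unfolding nonneg_orthant_def \<alpha>_def by auto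
    have mz: "monomial y i \<alpha> = 0 \<longleftrightarrow> (\<exists>k\<in>Z. y i k > 0)" for i
      unfolding mono_zero_iff \<alpha>_def by auto
    have m1: "monomial y i \<alpha> = 1" if "\<not> (\<exists>k\<in>Z. y i k > 0)" for i
      unfolding monomial_def \<alpha>_def using that by (intro prod.neutral) auto
    have "\<alpha> \<in> event_variety E y"
      unfolding event_variety_def
    proof (intro CollectI ballI, clarify)
      fix i j assume ij: "(i, j) \<in> E"
      have "i \<in> {1..n}" "j \<in> {1..n}" using ij assms(1) unfolding crn_def by auto
      moreover have "(j, i) \<in> (E \<union> E\<inverse>)\<^sup>*" using ij by auto
      ultimately have ji: "(j, i) \<in> E\<^sup>*" using assms(2) unfolding weakly_reversible_def by blast
      have "(\<exists>k\<in>Z. y i k > 0) \<longleftrightarrow> (\<exists>k\<in>Z. y j k > 0)"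
        using path_meets[OF S ji] S ij unfolding siphon_def by blast
      then show "monomial y i \<alpha> - monomial y j \<alpha> = 0"
        using mz[of i] mz[of j] m1[of i] m1[of j] by (cases "\<exists>k\<in>Z. y i k > 0") auto
    qed
    then show "\<exists>\<alpha>\<in>nonneg_orthant \<inter> event_variety E y. Z = zero_set \<alpha>" using zs nn by blast
  next
    assume "\<exists>\<alpha>\<in>nonneg_orthant \<inter> event_variety E y. Z = zero_set \<alpha>"
    then obtain \<alpha> where a: "\<alpha> \<in> event_variety E y" "Z = zero_set \<alpha>" by blast
    show "siphon E y Z" unfolding siphon_def
    proof (intro conjI assms(3) ballI, clarify)
      fix i j k assume ij: "(i, j) \<in> E" and k: "k \<in> Z" "0 < y j k"
      have "monomial y j \<alpha> = 0" using k a(2) unfolding mono_zero_iff zero_set_def by auto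
      moreover have "monomial y i \<alpha> = monomial y j \<alpha>" using a(1) ij
        unfolding event_variety_def by auto
      ultimately have "monomial y i \<alpha> = 0" by simp
      then show "\<exists>l\<in>Z. 0 < y i l" using a(2) unfolding mono_zero_iff zero_set_def by auto
    qed
  qed
  have P2: "critical_siphon E y Z \<longleftrightarrow>
            (\<exists>\<alpha>\<in>nonneg_orthant \<inter> event_variety E y. Z = zero_set \<alpha> \<and>
                invariant_polyhedron E y \<alpha> \<inter> pos_orthant \<noteq> {})"
  proof
    assume C: "critical_siphon E y Z"
    then obtain z where z: "z \<in> nonneg_orthant" "Z = zero_set z"
      "invariant_polyhedron E y z \<inter> pos_orthant \<noteq> {}" unfolding critical_siphon_def by blast
    from C P1 obtain \<alpha> where a: "\<alpha> \<in> nonneg_orthant \<inter> event_variety E y" "Z = zero_set \<alpha>"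
      unfolding critical_siphon_def by blast
    have "invariant_polyhedron E y \<alpha> \<inter> pos_orthant \<noteq> {}"
      using poly_transfer[of z \<alpha> E y] z a by auto
    then show "\<exists>\<alpha>\<in>nonneg_orthant \<inter> event_variety E y. Z = zero_set \<alpha> \<and>
                invariant_polyhedron E y \<alpha> \<inter> pos_orthant \<noteq> {}" using a by blast
  next
    assume "\<exists>\<alpha>\<in>nonneg_orthant \<inter> event_variety E y. Z = zero_set \<alpha> \<and>
                invariant_polyhedron E y \<alpha> \<inter> pos_orthant \<noteq> {}"
    then show "critical_siphon E y Z" using P1 unfolding critical_siphon_def by blast
  qed
  show ?thesis using P1 P2 by blast
qed

end
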